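(* Let $X$ be a separable real Banach space and let $(\Omega,\beta,\mu)$ be a complete probability measure space. Let $T:\Omega\times X\to X$ be a continuous random mapping such that there are real-valued random variables $\alpha_1,\alpha_2,\alpha_3:\Omega\to[0,\infty)$ with $\alpha_1(\omega)+\alpha_2(\omega)+\alpha_3(\omega)<1$ for all $\omega\in\Omega$ and, for every $\omega\in\Omega$ and all $X$-valued random variables $x_1,x_2:\Omega\to X$, $$\|T(\omega,x_1(\omega))-T(\omega,x_2(\omega))\|\le \alpha_1(\omega)\|x_1(\omega)-x_2(\omega)\|+\alpha_2(\omega)\|x_1(\omega)-T(\omega,x_1(\omega))\|+\alpha_3(\omega)\|x_2(\omega)-T(\omega,x_2(\omega))\|.$$ Then $T$ has a random fixed point, and it is unique (any two random fixed points of $T$ coincide almost surely).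
   Context: An $X$-valued random variable is a map $x:\Omega\to X$ such that $x^{-1}(B)\in\beta$ for every Borel set $B\subseteq X$. A random mapping is a map $T:\Omega\times X\to X$ such that $\omega\mapsto T(\omega,x)$ is an $X$-valued random variable for every fixed $x\in X$. A random mapping $T$ is continuous if the set of $\omega\in\Omega$ for which $x\mapsto T(\omega,x)$ is continuous has $\mu$-measure one. A random fixed point of $T$ is an $X$-valued random variable $x$ with $\mu\{\omega\in\Omega: T(\omega,x(\omega))=x(\omega)\}=1$. *)

theory Defs
  imports "HOL-Probability.Probability"
begin

definition random_var :: "'w measure \<Rightarrow> ('w \<Rightarrow> 'a::topological_space) \<Rightarrow> bool" where
  "random_var M x \<longleftrightarrow> x \<in> borel_measurable M"

definition random_mapping :: "'w measure \<Rightarrow> ('w \<Rightarrow> 'a::topological_space \<Rightarrow> 'a) \<Rightarrow> bool" where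
  "random_mapping M T \<longleftrightarrow> (\<forall>x. random_var M (\<lambda>\<omega>. T \<omega> x))"

definition continuous_random_mapping :: "'w measure \<Rightarrow> ('w \<Rightarrow> 'a::topological_space \<Rightarrow> 'a) \<Rightarrow> bool" where
  "continuous_random_mapping M T \<longleftrightarrow> random_mapping M T \<and>
     {\<omega> \<in> space M. continuous_on UNIV (T \<omega>)} \<in> sets M \<and>
     measure M {\<omega> \<in> space M. continuous_on UNIV (T \<omega>)} = 1"

definition random_fixed_point :: "'w measure \<Rightarrow> ('w \<Rightarrow> 'a::topological_space \<Rightarrow> 'a) \<Rightarrow> ('w \<Rightarrow> 'a) \<Rightarrow> bool" where
  "random_fixed_point M T x \<longleftrightarrow> random_var M x \<and>
     {\<omega> \<in> space M. T \<omega> (x \<omega>) = x \<omega>} \<in> sets M \<and>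
     measure M {\<omega> \<in> space M. T \<omega> (x \<omega>) = x \<omega>} = 1"

end

theory Submission
  imports Defs
begin

lemma reich_iter:
  fixes S :: "'a::banach \<Rightarrow> 'a" and a1 a2 a3 :: real
  assumes nn: "a1 \<ge> 0" "a2 \<ge> 0" "a3 \<ge> 0" and lt: "a1 + a2 + a3 < 1"
    and R: "\<And>a b. norm (S a - S b) \<le> a1 * norm (a - b) + a2 * norm (a - S a) + a3 * norm (b - S b)"
  shows "\<exists>L. (\<lambda>n. (S ^^ n) 0) \<longlonglongrightarrow> L \<and> S L = L"
proof -
  define u where "u n = (S ^^ n) 0" for n
  have uS: "u (Suc n) = S (u n)" for n by (simp add: u_def)
  define d where "d n = norm (u (Suc n) - u n)" for n
  define k where "k = (a1 + a3) / (1 - a2)"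
  have k0: "k \<ge> 0" and k1: "k < 1" using nn lt by (auto simp: k_def field_simps)
  have step: "d (Suc n) \<le> k * d n" for n
  proof -
    have "d (Suc n) \<le> a1 * d n + a2 * d (Suc n) + a3 * d n"
      using R[of "u (Suc n)" "u n"] unfolding d_def uS[symmetric]
      by (simp add: norm_minus_commute uS)
    then have "(1 - a2) * d (Suc n) \<le> (a1 + a3) * d n" by (simp add: algebra_simps)
    then show ?thesis using lt nn by (simp add: k_def field_simps)
  qed
  have dk: "d n \<le> d 0 * k ^ n" for n
  proof (induction n)
    case 0 then show ?case by simp
  next
    case (Suc n)
    have "d (Suc n) \<le> k * d n" by (rule step)
    also have "\<dots> \<le> k * (d 0 * k ^ n)" using Suc k0 by (simp add: mult_left_mono)
    finally show ?case by (simp add: algebra_simps)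
  qed
  have "summable (\<lambda>n. d 0 * k ^ n)" using k0 k1 by (intro summable_mult summable_geometric) simp
  then have sm: "summable (\<lambda>n. u (Suc n) - u n)"
    by (rule summable_comparison_test[rotated]) (use dk d_def in auto)
  have eq: "u n = u 0 + (\<Sum>i<n. u (Suc i) - u i)" for n
    by (simp add: sum_lessThan_telescope)
  have "(\<lambda>n. u 0 + (\<Sum>i<n. u (Suc i) - u i)) \<longlonglongrightarrow> u 0 + suminf (\<lambda>n. u (Suc n) - u n)"
    by (intro tendsto_add tendsto_const summable_LIMSEQ sm)
  moreover have "(\<lambda>n. u 0 + (\<Sum>i<n. u (Suc i) - u i)) = u" by (rule ext, rule eq[symmetric])
  ultimately obtain L where uL: "u \<longlonglongrightarrow> L" by auto
  have uL2: "(\<lambda>n. u (Suc n)) \<longlonglongrightarrow> L" using uL by (rule LIMSEQ_Suc)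
  define e where "e n = a1 * norm (L - u n) + a3 * norm (u n - u (Suc n)) + norm (u (Suc n) - L)" for n
  have "e \<longlonglongrightarrow> a1 * norm (L - L) + a3 * norm (L - L) + norm (L - L)"
    unfolding e_def by (intro tendsto_intros uL uL2)
  then have e0: "e \<longlonglongrightarrow> 0" by simp
  have bound: "(1 - a2) * norm (S L - L) \<le> e n" for n
  proof -
    have "norm (S L - L) \<le> norm (S L - S (u n)) + norm (u (Suc n) - L)"
      using norm_triangle_ineq[of "S L - S (u n)" "u (Suc n) - L"] by (simp add: uS)
    also have "\<dots> \<le> a1 * norm (L - u n) + a2 * norm (L - S L) + a3 * norm (u n - u (Suc n)) + norm (u (Suc n) - L)"
      using R[of L "u n"] by (simp add: uS)
    finally show ?thesis unfolding e_def by (simp add: norm_minus_commute algebra_simps)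
  qed
  have "(1 - a2) * norm (S L - L) \<le> 0"
    by (rule LIMSEQ_le_const[OF e0]) (use bound in auto)
  moreover have "1 - a2 > 0" using nn lt by simp
  ultimately have "norm (S L - L) \<le> 0" by (simp add: mult_le_0_iff)
  then have "S L = L" by simp
  with uL show ?thesis unfolding u_def by blast
qed

lemma complete_ae_meas:
  assumes cm: "complete_measure M" and g: "g \<in> borel_measurable M"
    and ae: "AE x in M. g x = h x"
  shows "h \<in> borel_measurable M"
proof (rule measurableI)
  show "h x \<in> space borel" for x by simp
next
  fix A :: "'b set" assume A: "A \<in> sets borel"
  have imp: "AE x in M. g x = h x \<longrightarrow> (x \<in> g -` A \<inter> space M \<longleftrightarrow> x \<in> h -` A \<inter> space M)"
  proof (rule AE_I2)
    fix x assume "x \<in> space M"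
    then show "g x = h x \<longrightarrow> (x \<in> g -` A \<inter> space M \<longleftrightarrow> x \<in> h -` A \<inter> space M)" by simp
  qed
  have ae2: "AE x in M. x \<in> g -` A \<inter> space M \<longleftrightarrow> x \<in> h -` A \<inter> space M"
    using AE_mp[OF ae imp] .
  have gA: "g -` A \<inter> space M \<in> sets M" using g A by (rule measurable_sets)
  have sub: "h -` A \<inter> space M \<subseteq> space M" by blast
  show "h -` A \<inter> space M \<in> sets M"
    by (rule complete_measure.in_sets_AE[OF cm ae2 gA sub])
qed

lemma comp_meas:
  fixes T :: "'w \<Rightarrow> 'a::{banach, second_countable_topology} \<Rightarrow> 'a"
  assumes ps: "prob_space M" and cm: "complete_measure M"
    and cT: "continuous_random_mapping M T" and f: "f \<in> borel_measurable M"
  shows "(\<lambda>\<omega>. T \<omega> (f \<omega>)) \<in> borel_measurable M"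
proof -
  define C where "C = {\<omega> \<in> space M. continuous_on UNIV (T \<omega>)}"
  have C: "C \<in> sets M" "measure M C = 1" using cT by (auto simp: continuous_random_mapping_def C_def)
  have aeC: "AE \<omega> in M. \<omega> \<in> C" using prob_space.AE_prob_1[OF ps] C by auto
  have Tm: "(\<lambda>\<omega>. T \<omega> a) \<in> borel_measurable M" for a
    using cT by (auto simp: continuous_random_mapping_def random_mapping_def random_var_def)
  obtain F where F: "\<And>i. simple_function M (F i)"
    and Fl: "\<And>x. x \<in> space M \<Longrightarrow> (\<lambda>i. F i x) \<longlonglongrightarrow> f x"
    using borel_measurable_implies_sequence_metric[OF f, of 0] by blast
  have G: "(\<lambda>\<omega>. T \<omega> (F i \<omega>)) \<in> borel_measurable M" for i
  proof -
    have g: "F i \<in> measurable M (count_space (F i ` space M))"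
      by (rule measurableI) (auto intro: simple_functionD(2)[OF F])
    have c: "countable (F i ` space M)" using simple_functionD(1)[OF F] by (rule countable_finite)
    show ?thesis
      using measurable_compose_countable'[where f="\<lambda>a \<omega>. T \<omega> a" and g="F i" and I="F i ` space M" and M=M and N=borel, OF Tm g c]
      by simp
  qed
  have gm: "(\<lambda>\<omega>. lim (\<lambda>i. T \<omega> (F i \<omega>))) \<in> borel_measurable M"
    by (rule borel_measurable_lim_metric) (rule G)
  have "AE \<omega> in M. lim (\<lambda>i. T \<omega> (F i \<omega>)) = T \<omega> (f \<omega>)"
    using aeC
  proof (rule AE_mp, intro AE_I2 impI)
    fix \<omega> assume "\<omega> \<in> space M" "\<omega> \<in> C"
    then have "isCont (T \<omega>) (f \<omega>)" "(\<lambda>i. F i \<omega>) \<longlonglongrightarrow> f \<omega>"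
      using Fl by (auto simp: C_def continuous_on_eq_continuous_at)
    then have "(\<lambda>i. T \<omega> (F i \<omega>)) \<longlonglongrightarrow> T \<omega> (f \<omega>)" by (rule isCont_tendsto_compose)
    then show "lim (\<lambda>i. T \<omega> (F i \<omega>)) = T \<omega> (f \<omega>)" by (rule limI)
  qed
  then show ?thesis by (rule complete_ae_meas[OF cm gm])
qed

theorem corollary3p3:
  fixes M :: "'w measure"
    and T :: "'w \<Rightarrow> 'a::{banach, second_countable_topology} \<Rightarrow> 'a"
    and \<alpha>1 \<alpha>2 \<alpha>3 :: "'w \<Rightarrow> real"
  assumes "prob_space M" and "complete_measure M"
    and "continuous_random_mapping M T"
    and "random_var M \<alpha>1" and "random_var M \<alpha>2" and "random_var M \<alpha>3"
    and "\<forall>\<omega>\<in>space M. \<alpha>1 \<omega> \<ge> 0 \<and> \<alpha>2 \<omega> \<ge> 0 \<and> \<alpha>3 \<omega> \<ge> 0"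
    and "\<forall>\<omega>\<in>space M. \<alpha>1 \<omega> + \<alpha>2 \<omega> + \<alpha>3 \<omega> < 1"
    and "\<forall>\<omega>\<in>space M. \<forall>x1 x2. random_var M x1 \<longrightarrow> random_var M x2 \<longrightarrow>
           norm (T \<omega> (x1 \<omega>) - T \<omega> (x2 \<omega>))
             \<le> \<alpha>1 \<omega> * norm (x1 \<omega> - x2 \<omega>) + \<alpha>2 \<omega> * norm (x1 \<omega> - T \<omega> (x1 \<omega>))
                + \<alpha>3 \<omega> * norm (x2 \<omega> - T \<omega> (x2 \<omega>))"
  shows "(\<exists>x. random_fixed_point M T x) \<and>
         (\<forall>x y. random_fixed_point M T x \<longrightarrow> random_fixed_point M T y \<longrightarrow>
                 (AE \<omega> in M. x \<omega> = y \<omega>))"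
proof -
  note ps = assms(1) and cm = assms(2) and cT = assms(3)
  have R: "norm (T \<omega> a - T \<omega> b) \<le> \<alpha>1 \<omega> * norm (a - b) + \<alpha>2 \<omega> * norm (a - T \<omega> a) + \<alpha>3 \<omega> * norm (b - T \<omega> b)"
    if "\<omega> \<in> space M" for \<omega> a b
    using assms(9)[rule_format, OF that, of "\<lambda>_. a" "\<lambda>_. b"] by (simp add: random_var_def)
  define xs where "xs n \<omega> = (T \<omega> ^^ n) 0" for n \<omega>
  have xm: "xs n \<in> borel_measurable M" for n
  proof (induction n)
    case 0 then show ?case by (simp add: xs_def)
  next
    case (Suc n)
    have "(\<lambda>\<omega>. T \<omega> (xs n \<omega>)) \<in> borel_measurable M" by (rule comp_meas[OF ps cm cT Suc])
    then show ?case by (simp add: xs_def)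
  qed
  define L where "L \<omega> = lim (\<lambda>n. xs n \<omega>)" for \<omega>
  have Lm: "L \<in> borel_measurable M" unfolding L_def by (rule borel_measurable_lim_metric) (rule xm)
  have fixL: "T \<omega> (L \<omega>) = L \<omega>" if w: "\<omega> \<in> space M" for \<omega>
  proof -
    obtain Z where Z: "(\<lambda>n. (T \<omega> ^^ n) 0) \<longlonglongrightarrow> Z" "T \<omega> Z = Z"
      using reich_iter[of "\<alpha>1 \<omega>" "\<alpha>2 \<omega>" "\<alpha>3 \<omega>" "T \<omega>"] assms(7,8) R[OF w] w by blast
    have "L \<omega> = Z" unfolding L_def xs_def using Z(1) by (rule limI)
    with Z show ?thesis by simp
  qed
  have sp: "{\<omega> \<in> space M. T \<omega> (L \<omega>) = L \<omega>} = space M" using fixL by auto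
  have "random_fixed_point M T L"
    unfolding random_fixed_point_def sp using Lm prob_space.prob_space[OF ps]
    by (auto simp: random_fixed_point_def random_var_def)
  moreover have "AE \<omega> in M. x \<omega> = y \<omega>"
    if x: "random_fixed_point M T x" and y: "random_fixed_point M T y" for x y
  proof -
    have "AE \<omega> in M. \<omega> \<in> {\<omega> \<in> space M. T \<omega> (x \<omega>) = x \<omega>}"
      by (rule prob_space.AE_prob_1[OF ps]) (use x in \<open>auto simp: random_fixed_point_def\<close>)
    moreover have "AE \<omega> in M. \<omega> \<in> {\<omega> \<in> space M. T \<omega> (y \<omega>) = y \<omega>}"
      by (rule prob_space.AE_prob_1[OF ps]) (use y in \<open>auto simp: random_fixed_point_def\<close>)
    ultimately show ?thesis
    proof eventually_elim
      case (elim \<omega>)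
      then have w: "\<omega> \<in> space M" and ex: "T \<omega> (x \<omega>) = x \<omega>" and ey: "T \<omega> (y \<omega>) = y \<omega>" by auto
      have "norm (x \<omega> - y \<omega>) \<le> \<alpha>1 \<omega> * norm (x \<omega> - y \<omega>)"
        using R[OF w, of "x \<omega>" "y \<omega>"] ex ey by simp
      moreover have "\<alpha>1 \<omega> < 1" using assms(7,8) w by fastforce
      ultimately have "(1 - \<alpha>1 \<omega>) * norm (x \<omega> - y \<omega>) \<le> 0" "1 - \<alpha>1 \<omega> > 0"
        by (simp_all add: algebra_simps)
      then have "norm (x \<omega> - y \<omega>) \<le> 0" by (simp add: mult_le_0_iff)
      then show ?case by simp
    qed
  qed
  ultimately show ?thesis by blast
qed

end
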